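(* Let $g\ge1$, $\Gamma\subset\mathrm{Sp}_{2g}(\mathbb Z)$ a congruence subgroup, $\mathcal A$ a finite-dimensional complex unital algebra, $e\in\mathbb C\setminus\{0\}$, $N\ne0$, and $\Phi:\mathbb H_g\to\mathcal A$ meromorphic with $\Phi(\gamma\cdot Z)=\det(J(\gamma,Z))^N\Phi(Z)$ for all $\gamma\in\Gamma$, pointwise invertible on a Zariski-open subset of $\mathbb H_g$. Then on that locus $A_\Phi:=\frac{2e}{N}\Phi^{-1}D(\Phi)$ (a symmetric $g\times g$ matrix with entries in $\mathcal A$) satisfies $$A_\Phi(\gamma\cdot Z)=J(\gamma,Z)A_\Phi(Z)J(\gamma,Z)^t+\frac{2e}{2\pi i}J(\gamma,Z)C^t\qquad\text{for all }\gamma=\begin{pmatrix}A_\gamma&B\\C&D\end{pmatrix}\in\Gamma.$$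
   Context: $\mathbb H_g=\{Z\in\mathrm{Mat}_g(\mathbb C):Z^t=Z,\ \mathrm{Im}Z>0\}$, $\gamma\cdot Z=(A_\gamma Z+B)(CZ+D)^{-1}$, $J(\gamma,Z)=CZ+D$. $D=\frac1{2\pi i}\frac{\partial}{\partial Z}$ is the symmetric matrix of operators with diagonal entries $\frac1{2\pi i}\partial/\partial Z_{ii}$ and off-diagonal entries $\frac1{2\pi i}\cdot\frac12\partial/\partial Z_{ij}$, applied entrywise; $\Phi^{-1}D(\Phi)$ means left multiplication of each entry by $\Phi^{-1}$. *)

theory Defs
  imports "HOL-Analysis.Analysis"
begin

text \<open>Genus g is encoded by a finite index type 'g (so g = CARD('g) \<ge> 1).
  Matrices in Mat_g(C) are complex^'g^'g; elements of Sp_2g(Z) are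
  integer (2g x 2g)-matrices indexed by 'g + 'g (first copy = first g coordinates).\<close>

definition sym_mats :: "(complex^'g::finite^'g) set" where
  "sym_mats = {Z. transpose Z = Z}"

definition Im_mat :: "complex^'g::finite^'g \<Rightarrow> real^'g^'g" where
  "Im_mat Z = (\<chi> i j. Im (Z$i$j))"

definition pos_def :: "real^'g::finite^'g \<Rightarrow> bool" where
  "pos_def M \<longleftrightarrow> (\<forall>x::real^'g. x \<noteq> 0 \<longrightarrow> x \<bullet> (M *v x) > 0)"

definition siegel_H :: "(complex^'g::finite^'g) set" where
  "siegel_H = {Z. transpose Z = Z \<and> pos_def (Im_mat Z)}"

definition Omega :: "int^('g::finite+'g)^('g+'g)" where
  "Omega = (\<chi> p q. case (p, q) of
       (Inl i, Inr j) \<Rightarrow> (if i = j then 1 else 0)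
     | (Inr i, Inl j) \<Rightarrow> (if i = j then -1 else 0)
     | _ \<Rightarrow> 0)"

definition Sp_Z :: "(int^('g::finite+'g)^('g+'g)) set" where
  "Sp_Z = {M. transpose M ** Omega ** M = Omega}"

definition Gamma_principal :: "nat \<Rightarrow> (int^('g::finite+'g)^('g+'g)) set" where
  "Gamma_principal n = {M \<in> Sp_Z. \<forall>p q. M$p$q mod int n = (if p = q then 1 else 0) mod int n}"

definition is_subgroup_Sp :: "(int^('g::finite+'g)^('g+'g)) set \<Rightarrow> bool" where
  "is_subgroup_Sp G \<longleftrightarrow> G \<subseteq> Sp_Z \<and> mat 1 \<in> G \<and>
     (\<forall>x\<in>G. \<forall>y\<in>G. x ** y \<in> G) \<and> (\<forall>x\<in>G. \<exists>y\<in>G. x ** y = mat 1 \<and> y ** x = mat 1)"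

definition congruence_subgroup :: "(int^('g::finite+'g)^('g+'g)) set \<Rightarrow> bool" where
  "congruence_subgroup G \<longleftrightarrow> is_subgroup_Sp G \<and> (\<exists>n>0. Gamma_principal n \<subseteq> G)"

definition blkA :: "int^('g::finite+'g)^('g+'g) \<Rightarrow> complex^'g^'g" where
  "blkA M = (\<chi> i j. of_int (M $ Inl i $ Inl j))"
definition blkB :: "int^('g::finite+'g)^('g+'g) \<Rightarrow> complex^'g^'g" where
  "blkB M = (\<chi> i j. of_int (M $ Inl i $ Inr j))"
definition blkC :: "int^('g::finite+'g)^('g+'g) \<Rightarrow> complex^'g^'g" where
  "blkC M = (\<chi> i j. of_int (M $ Inr i $ Inl j))"
definition blkD :: "int^('g::finite+'g)^('g+'g) \<Rightarrow> complex^'g^'g" where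
  "blkD M = (\<chi> i j. of_int (M $ Inr i $ Inr j))"

definition Jfac :: "int^('g::finite+'g)^('g+'g) \<Rightarrow> complex^'g^'g \<Rightarrow> complex^'g^'g" where
  "Jfac M Z = blkC M ** Z + blkD M"

definition sp_act :: "int^('g::finite+'g)^('g+'g) \<Rightarrow> complex^'g^'g \<Rightarrow> complex^'g^'g" where
  "sp_act M Z = (blkA M ** Z + blkB M) ** matrix_inv (Jfac M Z)"

text \<open>A finite-dimensional complex unital algebra is modelled as a real normed unital
  algebra 'a (any norm; all norms are equivalent in finite dimension) which is finite-dimensional
  over R, together with the structure map iota : C -> A, a unital ring homomorphism into the
  centre extending the real structure.  Complex scalar multiplication is c.a = iota c * a.\<close>

definition complex_alg_struct :: "(complex \<Rightarrow> 'a::real_normed_algebra_1) \<Rightarrow> bool" where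
  "complex_alg_struct \<iota> \<longleftrightarrow>
     (\<forall>z w. \<iota> (z + w) = \<iota> z + \<iota> w) \<and> (\<forall>z w. \<iota> (z * w) = \<iota> z * \<iota> w) \<and>
     (\<forall>r. \<iota> (complex_of_real r) = of_real r) \<and> (\<forall>z a. \<iota> z * a = a * \<iota> z) \<and>
     (\<exists>B. finite B \<and> span B = (UNIV :: 'a set))"

definition alg_invertible :: "'a::ring_1 \<Rightarrow> bool" where
  "alg_invertible x \<longleftrightarrow> (\<exists>y. y * x = 1 \<and> x * y = 1)"

definition alg_inv :: "'a::ring_1 \<Rightarrow> 'a" where
  "alg_inv x = (THE y. y * x = 1 \<and> x * y = 1)"

definition cscale :: "complex \<Rightarrow> complex^'g::finite^'g \<Rightarrow> complex^'g^'g" where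
  "cscale c H = (\<chi> i j. c * H$i$j)"

text \<open>Holomorphy at Z of a function on (an open part of) H_g, i.e. of a function of the
  independent coordinates of a symmetric matrix: real-differentiable along symmetric matrices
  with a complex-linear derivative.\<close>
definition holo_at :: "(complex \<Rightarrow> 'a::real_normed_algebra_1) \<Rightarrow> (complex^'g::finite^'g \<Rightarrow> 'a) \<Rightarrow> complex^'g^'g \<Rightarrow> bool" where
  "holo_at \<iota> \<Phi> Z \<longleftrightarrow> (\<exists>\<Phi>'. (\<Phi> has_derivative \<Phi>') (at Z within sym_mats) \<and>
      (\<forall>c H. H \<in> sym_mats \<longrightarrow> \<Phi>' (cscale c H) = \<iota> c * \<Phi>' H))"

text \<open>E_ij + E_ji for i \<noteq> j, and E_ii for i = j: the coordinate direction of Z_ij on symmetric matrices.\<close>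
definition symE :: "'g::finite \<Rightarrow> 'g \<Rightarrow> complex^'g^'g" where
  "symE i j = (\<chi> k l. if (k = i \<and> l = j) \<or> (k = j \<and> l = i) then 1 else 0)"

definition partial_Z :: "(complex^'g::finite^'g \<Rightarrow> 'a::real_normed_vector) \<Rightarrow> complex^'g^'g \<Rightarrow> 'g \<Rightarrow> 'g \<Rightarrow> 'a" where
  "partial_Z \<Phi> Z i j = Lim (at (0::real)) (\<lambda>t. (1 / t) *\<^sub>R (\<Phi> (Z + t *\<^sub>R symE i j) - \<Phi> Z))"

text \<open>D = (1/(2 pi i)) d/dZ: diagonal entries (1/2pi i) d/dZ_ii, off-diagonal (1/2pi i)(1/2) d/dZ_ij.\<close>
definition Dop :: "(complex \<Rightarrow> 'a::real_normed_algebra_1) \<Rightarrow> (complex^'g::finite^'g \<Rightarrow> 'a) \<Rightarrow> complex^'g^'g \<Rightarrow> 'a^'g^'g" where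
  "Dop \<iota> \<Phi> Z = (\<chi> i j. if i = j then \<iota> (1 / (2 * pi * \<i>)) * partial_Z \<Phi> Z i i
                          else \<iota> (1 / (2 * pi * \<i>)) * \<iota> (1/2) * partial_Z \<Phi> Z i j)"

definition A_Phi :: "(complex \<Rightarrow> 'a::real_normed_algebra_1) \<Rightarrow> complex \<Rightarrow> int \<Rightarrow> (complex^'g::finite^'g \<Rightarrow> 'a) \<Rightarrow> complex^'g^'g \<Rightarrow> 'a^'g^'g" where
  "A_Phi \<iota> e N \<Phi> Z = (\<chi> i j. \<iota> (2 * e / of_int N) * (alg_inv (\<Phi> Z) * Dop \<iota> \<Phi> Z $ i $ j))"

end

theory Submission
  imports Defs
begin

lemma sum_UNIV_plus: "(\<Sum>p\<in>(UNIV::('g::finite+'g) set). f p) = (\<Sum>k\<in>UNIV. f (Inl k)) + (\<Sum>k\<in>UNIV. f (Inr k))"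
  by (subst UNIV_Plus_UNIV[symmetric], subst sum.Plus) (simp_all add: o_def)

lemma Omega_entries:
  "Omega $ Inl i $ Inl j = 0" "Omega $ Inr i $ Inr j = 0"
  "Omega $ Inl i $ Inr j = (if i = j then 1 else 0)"
  "Omega $ Inr i $ Inl j = (if i = j then -1 else 0)"
  by (simp_all add: Omega_def)

lemma MtOM_entry:
  fixes M :: "int^('g::finite+'g)^('g+'g)"
  shows "(transpose M ** Omega ** M) $ p $ q = (\<Sum>k\<in>UNIV. M $ Inl k $ p * M $ Inr k $ q - M $ Inr k $ p * M $ Inl k $ q)"
  by (simp add: matrix_matrix_mult_def transpose_def sum_UNIV_plus Omega_entries sum_distrib_right
      if_distrib if_distribR sum.delta sum_subtractf sum_negf algebra_simps cong: if_cong)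

lemma MOMt_entry:
  fixes M :: "int^('g::finite+'g)^('g+'g)"
  shows "(M ** Omega ** transpose M) $ p $ q = (\<Sum>k\<in>UNIV. M $ p $ Inl k * M $ q $ Inr k - M $ p $ Inr k * M $ q $ Inl k)"
  by (simp add: matrix_matrix_mult_def transpose_def sum_UNIV_plus Omega_entries sum_distrib_right
      if_distrib if_distribR sum.delta sum_subtractf sum_negf algebra_simps cong: if_cong)

lemma Omega_orth_entry: "(Omega ** transpose Omega) $ p $ q = (mat 1 :: int^('g::finite+'g)^('g+'g)) $ p $ q"
   "(transpose Omega ** Omega) $ p $ q = (mat 1 :: int^('g::finite+'g)^('g+'g)) $ p $ q"
proof -
  have e: "Omega $ p $ q = (case (p, q) of (Inl i, Inr j) \<Rightarrow> (if i = j then 1 else 0)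
     | (Inr i, Inl j) \<Rightarrow> (if i = j then -1 else 0) | _ \<Rightarrow> 0)" for p q
    by (simp add: Omega_def)
  show "(Omega ** transpose Omega) $ p $ q = (mat 1 :: int^('g::finite+'g)^('g+'g)) $ p $ q"
    unfolding matrix_matrix_mult_def transpose_def mat_def
    by (cases p; cases q) (auto simp: sum_UNIV_plus e if_distrib if_distribR sum.delta cong: if_cong)
  show "(transpose Omega ** Omega) $ p $ q = (mat 1 :: int^('g::finite+'g)^('g+'g)) $ p $ q"
    unfolding matrix_matrix_mult_def transpose_def mat_def
    by (cases p; cases q) (auto simp: sum_UNIV_plus e if_distrib if_distribR sum.delta cong: if_cong)
qed

lemma Omega_orth: "Omega ** transpose Omega = (mat 1 :: int^('g::finite+'g)^('g+'g))"
   "transpose Omega ** Omega = (mat 1 :: int^('g::finite+'g)^('g+'g))"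
  by (simp_all add: vec_eq_iff Omega_orth_entry)

lemma MOMt:
  fixes M y :: "int^('g::finite+'g)^('g+'g)"
  assumes "transpose M ** Omega ** M = Omega" "M ** y = mat 1"
  shows "M ** Omega ** transpose M = Omega"
proof -
  have "transpose M ** Omega = Omega ** y"
    by (metis assms matrix_mul_assoc matrix_mul_rid)
  hence "transpose Omega ** transpose M ** Omega = y"
    by (metis Omega_orth(2) matrix_mul_assoc matrix_mul_lid)
  hence "M ** transpose Omega ** transpose M ** Omega = mat 1"
    by (metis assms(2) matrix_mul_assoc)
  hence "M ** transpose Omega ** transpose M = transpose Omega"
    by (metis Omega_orth(1) matrix_mul_assoc matrix_mul_lid matrix_mul_rid)
  hence "transpose (M ** transpose Omega ** transpose M) = Omega"
    by (simp add: transpose_transpose)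
  thus ?thesis by (simp add: matrix_transpose_mul transpose_transpose matrix_mul_assoc)
qed

lemma symp_blocks:
  fixes M y :: "int^('g::finite+'g)^('g+'g)"
  assumes "transpose M ** Omega ** M = Omega" "M ** y = mat 1"
  shows "transpose (blkA M) ** blkC M = transpose (blkC M) ** blkA M"
    "transpose (blkD M) ** blkA M - transpose (blkB M) ** blkC M = mat 1"
    "blkC M ** transpose (blkD M) = blkD M ** transpose (blkC M)"
proof -
  have o: "M ** Omega ** transpose M = Omega" using MOMt assms by blast
  show "transpose (blkA M) ** blkC M = transpose (blkC M) ** blkA M"
  proof (rule iffD2[OF vec_eq_iff], rule allI, rule iffD2[OF vec_eq_iff], rule allI)
    fix i j
    have "(transpose M ** Omega ** M) $ Inl i $ Inl j = Omega $ Inl i $ Inl j" using assms by simp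
    hence "(\<Sum>k\<in>UNIV. M $ Inl k $ Inl i * M $ Inr k $ Inl j - M $ Inr k $ Inl i * M $ Inl k $ Inl j) = 0"
      by (simp add: MtOM_entry Omega_entries)
    hence "of_int (\<Sum>k\<in>UNIV. M $ Inl k $ Inl i * M $ Inr k $ Inl j - M $ Inr k $ Inl i * M $ Inl k $ Inl j) = (0::complex)"
      by simp
    thus "(transpose (blkA M) ** blkC M) $ i $ j = (transpose (blkC M) ** blkA M) $ i $ j"
      by (simp add: matrix_matrix_mult_def transpose_def blkA_def blkC_def sum_subtractf)
  qed
  show "transpose (blkD M) ** blkA M - transpose (blkB M) ** blkC M = mat 1"
  proof (rule iffD2[OF vec_eq_iff], rule allI, rule iffD2[OF vec_eq_iff], rule allI)
    fix i j
    have "(transpose M ** Omega ** M) $ Inr i $ Inl j = Omega $ Inr i $ Inl j" using assms by simp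
    hence "(\<Sum>k\<in>UNIV. M $ Inl k $ Inr i * M $ Inr k $ Inl j - M $ Inr k $ Inr i * M $ Inl k $ Inl j) = (if i = j then -1 else 0)"
      by (simp add: MtOM_entry Omega_entries)
    hence "of_int (\<Sum>k\<in>UNIV. M $ Inl k $ Inr i * M $ Inr k $ Inl j - M $ Inr k $ Inr i * M $ Inl k $ Inl j) = (of_int (if i = j then -1 else 0)::complex)"
      by simp
    thus "(transpose (blkD M) ** blkA M - transpose (blkB M) ** blkC M) $ i $ j = mat 1 $ i $ j"
      by (simp add: matrix_matrix_mult_def transpose_def blkA_def blkC_def blkB_def blkD_def sum_subtractf mat_def
          algebra_simps split: if_splits)
  qed
  show "blkC M ** transpose (blkD M) = blkD M ** transpose (blkC M)"
  proof (rule iffD2[OF vec_eq_iff], rule allI, rule iffD2[OF vec_eq_iff], rule allI)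
    fix i j
    have "(M ** Omega ** transpose M) $ Inr i $ Inr j = Omega $ Inr i $ Inr j" using o by simp
    hence "(\<Sum>k\<in>UNIV. M $ Inr i $ Inl k * M $ Inr j $ Inr k - M $ Inr i $ Inr k * M $ Inr j $ Inl k) = 0"
      by (simp add: MOMt_entry Omega_entries)
    hence "of_int (\<Sum>k\<in>UNIV. M $ Inr i $ Inl k * M $ Inr j $ Inr k - M $ Inr i $ Inr k * M $ Inr j $ Inl k) = (0::complex)"
      by simp
    thus "(blkC M ** transpose (blkD M)) $ i $ j = (blkD M ** transpose (blkC M)) $ i $ j"
      by (simp add: matrix_matrix_mult_def transpose_def blkD_def blkC_def sum_subtractf mult.commute)
  qed
qed

lemma iota_props:
  fixes \<iota> :: "complex \<Rightarrow> 'a::real_normed_algebra_1"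
  assumes "complex_alg_struct \<iota>"
  shows "bounded_linear \<iota>" "\<iota> (z + w) = \<iota> z + \<iota> w" "\<iota> (z * w) = \<iota> z * \<iota> w"
    "\<iota> 0 = 0" "\<iota> 1 = 1" "\<iota> z * a = a * \<iota> z"
    "z \<noteq> 0 \<Longrightarrow> \<iota> (inverse z) * \<iota> z = 1"
    "\<iota> (- z) = - \<iota> z" "\<iota> (z - w) = \<iota> z - \<iota> w"
proof -
  have add: "\<And>z w. \<iota> (z + w) = \<iota> z + \<iota> w" and mul: "\<And>z w. \<iota> (z * w) = \<iota> z * \<iota> w"
    and re: "\<And>r. \<iota> (complex_of_real r) = of_real r" and cen: "\<And>z a. \<iota> z * a = a * \<iota> z"
    using assms unfolding complex_alg_struct_def by blast+
  show "\<iota> (z + w) = \<iota> z + \<iota> w" "\<iota> (z * w) = \<iota> z * \<iota> w" "\<iota> z * a = a * \<iota> z" by (rule add, rule mul, rule cen)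
  have sc: "\<iota> (r *\<^sub>R z) = r *\<^sub>R \<iota> z" for r z
  proof -
    have "\<iota> (r *\<^sub>R z) = \<iota> (complex_of_real r * z)" by (simp add: scaleR_conv_of_real)
    also have "\<dots> = of_real r * \<iota> z" by (simp only: mul re)
    also have "\<dots> = r *\<^sub>R \<iota> z" by (simp add: scaleR_conv_of_real)
    finally show ?thesis .
  qed
  have lin: "linear \<iota>" by (rule linearI) (rule add, rule sc)
  thus "bounded_linear \<iota>" using linear_conv_bounded_linear by blast
  show z0: "\<iota> 0 = 0" using re[of 0] by simp
  show o1: "\<iota> 1 = 1" using re[of 1] by simp
  show "z \<noteq> 0 \<Longrightarrow> \<iota> (inverse z) * \<iota> z = 1"
  proof -
    assume "z \<noteq> 0"
    have "\<iota> (inverse z) * \<iota> z = \<iota> (inverse z * z)" by (simp only: mul)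
    thus ?thesis using \<open>z \<noteq> 0\<close> o1 by simp
  qed
  show "\<iota> (- z) = - \<iota> z" using lin by (simp add: linear_neg)
  show "\<iota> (z - w) = \<iota> z - \<iota> w" using lin by (simp add: linear_diff)
qed


lemma dq_iff:
  fixes f :: "real \<Rightarrow> 'b::real_normed_vector"
  shows "(f has_derivative (\<lambda>s. s *\<^sub>R v)) (at 0) \<longleftrightarrow> ((\<lambda>t. (1/t) *\<^sub>R (f t - f 0)) \<longlongrightarrow> v) (at 0)"
proof -
  have nr: "norm ((f y - f 0 - (y - 0) *\<^sub>R v) /\<^sub>R norm (y - 0)) = norm ((1/y) *\<^sub>R (f y - f 0) - v)"
    if "y \<noteq> 0" for y :: real
  proof -
    have "(1/y) *\<^sub>R (f y - f 0) - v = (1/y) *\<^sub>R (f y - f 0 - y *\<^sub>R v)"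
      using that by (simp add: scaleR_right_diff_distrib)
    moreover have "norm ((f y - f 0 - (y - 0) *\<^sub>R v) /\<^sub>R norm (y - 0)) = norm (f y - f 0 - y *\<^sub>R v) / \<bar>y\<bar>"
      by simp (metis divide_inverse mult.commute)
    moreover have "norm ((1/y) *\<^sub>R (f y - f 0 - y *\<^sub>R v)) = norm (f y - f 0 - y *\<^sub>R v) / \<bar>y\<bar>"
      by simp
    ultimately show ?thesis by simp
  qed
  have eq: "\<forall>\<^sub>F y in at (0::real). norm ((f y - f 0 - (y - 0) *\<^sub>R v) /\<^sub>R norm (y - 0)) = norm ((1/y) *\<^sub>R (f y - f 0) - v)"
    unfolding eventually_at_filter using nr by auto
  have "(f has_derivative (\<lambda>s. s *\<^sub>R v)) (at 0) \<longleftrightarrow> ((\<lambda>y. (f y - f 0 - (y - 0) *\<^sub>R v) /\<^sub>R norm (y - 0)) \<longlongrightarrow> 0) (at 0)"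
    by (simp add: has_derivative_at_within bounded_linear_scaleR_left)
  also have "\<dots> \<longleftrightarrow> ((\<lambda>y. norm ((f y - f 0 - (y - 0) *\<^sub>R v) /\<^sub>R norm (y - 0))) \<longlongrightarrow> 0) (at 0)"
    by (rule tendsto_norm_zero_iff[symmetric])
  also have "\<dots> \<longleftrightarrow> ((\<lambda>y. norm ((1/y) *\<^sub>R (f y - f 0) - v)) \<longlongrightarrow> 0) (at 0)"
    by (rule tendsto_cong[OF eq])
  also have "\<dots> \<longleftrightarrow> ((\<lambda>y. (1/y) *\<^sub>R (f y - f 0) - v) \<longlongrightarrow> 0) (at 0)"
    by (rule tendsto_norm_zero_iff)
  also have "\<dots> \<longleftrightarrow> ((\<lambda>t. (1/t) *\<^sub>R (f t - f 0)) \<longlongrightarrow> v) (at 0)"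
    by (rule LIM_zero_iff)
  finally show ?thesis .
qed

lemma sym_mats_add: "A \<in> sym_mats \<Longrightarrow> B \<in> sym_mats \<Longrightarrow> A + B \<in> sym_mats"
  by (auto simp: sym_mats_def vec_eq_iff transpose_def)
lemma sym_mats_scaleR: "A \<in> sym_mats \<Longrightarrow> c *\<^sub>R A \<in> sym_mats"
  by (auto simp: sym_mats_def vec_eq_iff transpose_def)
lemma sym_mats_cscale: "A \<in> sym_mats \<Longrightarrow> cscale c A \<in> sym_mats"
  by (auto simp: sym_mats_def vec_eq_iff transpose_def cscale_def)
lemma symE_sym: "symE i j \<in> sym_mats"
  by (auto simp: sym_mats_def vec_eq_iff transpose_def symE_def)

lemma line_deriv:
  fixes \<Phi> :: "complex^'g::finite^'g \<Rightarrow> 'a::real_normed_vector"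
  assumes "(\<Phi> has_derivative \<Phi>') (at Y within sym_mats)" "Y \<in> sym_mats" "H \<in> sym_mats"
  shows "((\<lambda>t::real. \<Phi> (Y + t *\<^sub>R H)) has_derivative (\<lambda>s. s *\<^sub>R \<Phi>' H)) (at 0)"
proof -
  have l: "((\<lambda>t::real. Y + t *\<^sub>R H) has_derivative (\<lambda>s. s *\<^sub>R H)) (at 0)"
    by (auto intro!: derivative_eq_intros)
  have sub: "(\<lambda>t::real. Y + t *\<^sub>R H) ` UNIV \<subseteq> sym_mats"
    using assms by (auto intro!: sym_mats_add sym_mats_scaleR)
  have d: "(\<Phi> has_derivative \<Phi>') (at ((\<lambda>t::real. Y + t *\<^sub>R H) 0) within (\<lambda>t::real. Y + t *\<^sub>R H) ` UNIV)"
    using has_derivative_subset[OF assms(1) sub] by simp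
  have "((\<lambda>t::real. \<Phi> (Y + t *\<^sub>R H)) has_derivative (\<lambda>s. \<Phi>' (s *\<^sub>R H))) (at 0)"
    using has_derivative_in_compose[OF l d] by simp
  moreover have "(\<lambda>s. \<Phi>' (s *\<^sub>R H)) = (\<lambda>s. s *\<^sub>R \<Phi>' H)"
    using linear.scaleR[OF bounded_linear.linear[OF has_derivative_bounded_linear[OF assms(1)]]] by auto
  ultimately show ?thesis by simp
qed

lemma partial_eq:
  fixes \<Phi> :: "complex^'g::finite^'g \<Rightarrow> 'a::real_normed_vector"
  assumes "(\<Phi> has_derivative \<Phi>') (at Y within sym_mats)" "Y \<in> sym_mats"
  shows "partial_Z \<Phi> Y i j = \<Phi>' (symE i j)"
proof -
  have "((\<lambda>t::real. \<Phi> (Y + t *\<^sub>R symE i j)) has_derivative (\<lambda>s. s *\<^sub>R \<Phi>' (symE i j))) (at 0)"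
    by (rule line_deriv[OF assms symE_sym])
  hence "((\<lambda>t. (1/t) *\<^sub>R (\<Phi> (Y + t *\<^sub>R symE i j) - \<Phi> Y)) \<longlongrightarrow> \<Phi>' (symE i j)) (at (0::real))"
    using dq_iff[of "\<lambda>t::real. \<Phi> (Y + t *\<^sub>R symE i j)"] by simp
  thus ?thesis unfolding partial_Z_def by (intro tendsto_Lim) auto
qed

definition Ep :: "'g::finite \<Rightarrow> 'g \<Rightarrow> complex^'g^'g" where
  "Ep a b = cscale (if a = b then 1 else 1/2) (symE a b)"

lemma Ep_sym: "Ep a b \<in> sym_mats"
  unfolding Ep_def by (intro sym_mats_cscale symE_sym)

lemma Ep_entry: "Ep a b $ k $ l = ((if k = a \<and> l = b then 1 else 0) + (if k = b \<and> l = a then 1 else 0)) / 2"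
  unfolding Ep_def cscale_def symE_def by (cases "a = b"; cases "k = a"; cases "l = b"; cases "k = b"; cases "l = a") simp_all

lemma Dop_eq:
  fixes \<Phi> :: "complex^'g::finite^'g \<Rightarrow> 'a::real_normed_algebra_1"
  assumes "complex_alg_struct \<iota>" "(\<Phi> has_derivative \<Phi>') (at Y within sym_mats)" "Y \<in> sym_mats"
    "\<forall>c H. H \<in> sym_mats \<longrightarrow> \<Phi>' (cscale c H) = \<iota> c * \<Phi>' H"
  shows "Dop \<iota> \<Phi> Y $ i $ j = \<iota> (1 / (2 * pi * \<i>)) * \<Phi>' (Ep i j)"
proof -
  have "\<Phi>' (Ep i j) = \<iota> (if i = j then 1 else 1/2) * \<Phi>' (symE i j)"
    unfolding Ep_def using assms(4) symE_sym by blast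
  moreover have "Dop \<iota> \<Phi> Y $ i $ j = (if i = j then \<iota> (1 / (2 * pi * \<i>)) * \<Phi>' (symE i i)
                          else \<iota> (1 / (2 * pi * \<i>)) * \<iota> (1/2) * \<Phi>' (symE i j))"
    unfolding Dop_def partial_eq[OF assms(2,3)] by simp
  ultimately show ?thesis
    using iota_props(5)[OF assms(1)] by (cases "i = j") (simp_all add: mult.assoc)
qed

lemma matrix_add_rdistrib: "((B + C) ** (A::'a::comm_ring_1^'n^'m)) = (B ** A) + (C ** A)"
  by (simp add: vec_eq_iff matrix_matrix_mult_def sum.distrib algebra_simps)
lemma matrix_diff_rdistrib: "((B - C) ** (A::'a::comm_ring_1^'n^'m)) = (B ** A) - (C ** A)"
  by (simp add: vec_eq_iff matrix_matrix_mult_def sum_subtractf algebra_simps)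
lemma matrix_diff_ldistrib: "((A::'a::comm_ring_1^'n^'m) ** (B - C)) = (A ** B) - (A ** C)"
  by (simp add: vec_eq_iff matrix_matrix_mult_def sum_subtractf algebra_simps)

lemma inv_props:
  fixes J :: "complex^'n::finite^'n"
  assumes "det J \<noteq> 0"
  shows "J ** matrix_inv J = mat 1" "matrix_inv J ** J = mat 1"
proof -
  have "invertible J" using assms invertible_det_nz by blast
  then obtain J' where "J ** J' = mat 1 \<and> J' ** J = mat 1" unfolding invertible_def by blast
  hence "J ** matrix_inv J = mat 1 \<and> matrix_inv J ** J = mat 1"
    unfolding matrix_inv_def by (rule someI)
  thus "J ** matrix_inv J = mat 1" "matrix_inv J ** J = mat 1" by auto
qed

lemma inv_cramer:
  fixes M :: "complex^'n::finite^'n"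
  assumes "det M \<noteq> 0"
  shows "matrix_inv M $ k $ l = det (\<chi> i j. if j = k then (if i = l then 1 else 0) else M$i$j) / det M"
proof -
  let ?x = "\<chi> k. matrix_inv M $ k $ l"
  let ?b = "\<chi> i. if i = l then 1 else (0::complex)"
  have "M *v ?x = (M ** matrix_inv M) *v (\<chi> i. if i = l then 1 else 0)"
    by (simp add: vec_eq_iff matrix_vector_mult_def matrix_matrix_mult_def if_distrib if_distribR sum.delta
      sum_distrib_left cong: if_cong)
  also have "\<dots> = ?b" using inv_props[OF assms] by simp
  finally have "?x = (\<chi> k. det(\<chi> i j. if j=k then ?b$i else M$i$j) / det M)"
    using cramer[OF assms] by blast
  hence "?x $ k = (\<chi> k. det(\<chi> i j. if j=k then ?b$i else M$i$j) / det M) $ k" by simp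
  thus ?thesis by (simp only: vec_lambda_beta)
qed

lemma tendsto_det:
  fixes f :: "'b \<Rightarrow> complex^'n::finite^'n"
  assumes "(f \<longlongrightarrow> A) F"
  shows "((\<lambda>x. det (f x)) \<longlongrightarrow> det A) F"
  unfolding det_def using assms
  by (intro tendsto_intros)

lemma tendsto_matrix_inv:
  fixes f :: "'b \<Rightarrow> complex^'n::finite^'n"
  assumes "(f \<longlongrightarrow> A) F" "det A \<noteq> 0" "\<forall>\<^sub>F x in F. det (f x) \<noteq> 0"
  shows "((\<lambda>x. matrix_inv (f x)) \<longlongrightarrow> matrix_inv A) F"
proof (rule vec_tendstoI, rule vec_tendstoI)
  fix k l
  have lim: "((\<lambda>x. det (\<chi> i j. if j = k then (if i = l then 1 else 0) else f x $i$j) / det (f x)) \<longlongrightarrow>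
     det (\<chi> i j. if j = k then (if i = l then 1 else 0) else A$i$j) / det A) F"
  proof -
    have fij: "((\<lambda>x. f x $ i $ j) \<longlongrightarrow> A $ i $ j) F" for i j by (intro tendsto_vec_nth assms(1))
    show ?thesis using assms(1,2) fij by (intro tendsto_intros tendsto_det) auto
  qed
  have ev: "\<forall>\<^sub>F x in F. det (\<chi> i j. if j = k then (if i = l then 1 else 0) else f x $i$j) / det (f x) = matrix_inv (f x) $ k $ l"
    using assms(3) by eventually_elim (simp add: inv_cramer)
  show "((\<lambda>x. matrix_inv (f x) $ k $ l) \<longlongrightarrow> matrix_inv A $ k $ l) F"
    using Lim_transform_eventually[OF lim ev] inv_cramer[OF assms(2)] by simp
qed

lemma tendsto_matrix_mult_left:
  fixes f :: "'b \<Rightarrow> complex^'n::finite^'m::finite"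
  assumes "(f \<longlongrightarrow> L) F"
  shows "((\<lambda>x. (A::complex^'m^'k::finite) ** f x) \<longlongrightarrow> A ** L) F"
  unfolding matrix_matrix_mult_def using assms by (intro tendsto_intros)

lemma perm_nonid_moves:
  assumes "p permutes (UNIV::'n::finite set)" "p \<noteq> id"
  shows "\<exists>j. j \<noteq> i \<and> p j \<noteq> j"
proof -
  obtain k where k: "p k \<noteq> k" using assms(2) by (auto simp: fun_eq_iff)
  show ?thesis
  proof (cases "k = i")
    case False thus ?thesis using k by blast
  next
    case True
    have "p (p i) \<noteq> p i"
    proof
      assume "p (p i) = p i"
      hence "p i = i" using permutes_inj[OF assms(1)] by (auto dest: injD)
      thus False using k True by simp
    qed
    thus ?thesis using k True by metis
  qed
qed

lemma det_deriv_id: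
  fixes M :: "complex^'n::finite^'n"
  shows "((\<lambda>t::real. det (mat 1 + t *\<^sub>R M)) has_derivative (\<lambda>s. s *\<^sub>R trace M)) (at 0)"
proof -
  let ?P = "{p. p permutes (UNIV::'n set)}"
  have e: "(mat 1 + t *\<^sub>R M) $ i $ j = mat 1 $ i $ j + t *\<^sub>R M $ i $ j" for t i j by simp
  have dent: "((\<lambda>t::real. (mat 1 + t *\<^sub>R M) $ i $ j) has_derivative (\<lambda>s. s *\<^sub>R M $ i $ j)) (at 0)" for i j
    unfolding e by (auto intro!: derivative_eq_intros)
  have D: "((\<lambda>t::real. det (mat 1 + t *\<^sub>R M)) has_derivative
     (\<lambda>s. \<Sum>p\<in>?P. of_int (sign p) * (\<Sum>i\<in>UNIV. (s *\<^sub>R M $ i $ p i) * (\<Prod>j\<in>UNIV-{i}. (mat 1 + 0 *\<^sub>R M) $ j $ p j)))) (at 0)"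
    unfolding det_def
    by (intro has_derivative_sum has_derivative_mult_right has_derivative_prod dent)
  have z: "(\<Sum>i\<in>UNIV. (s *\<^sub>R M $ i $ p i) * (\<Prod>j\<in>UNIV-{i}. (mat 1 + 0 *\<^sub>R M) $ j $ p j)) = 0"
    if "p \<in> ?P - {id}" for p s
  proof (rule sum.neutral, rule ballI)
    fix i
    have pp: "p permutes UNIV" "p \<noteq> id" using that by auto
    obtain j where "j \<noteq> i" "p j \<noteq> j" using perm_nonid_moves[OF pp, of i] by blast
    hence "(\<Prod>j\<in>UNIV-{i}. (mat 1 + 0 *\<^sub>R M) $ j $ p j) = (0::complex)"
      by (intro prod_zero) (auto simp: mat_def intro!: bexI[of _ j])
    thus "(s *\<^sub>R M $ i $ p i) * (\<Prod>j\<in>UNIV-{i}. (mat 1 + 0 *\<^sub>R M) $ j $ p j) = 0" by simp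
  qed
  have "(\<Sum>p\<in>?P. of_int (sign p) * (\<Sum>i\<in>UNIV. (s *\<^sub>R M $ i $ p i) * (\<Prod>j\<in>UNIV-{i}. (mat 1 + 0 *\<^sub>R M) $ j $ p j)))
      = s *\<^sub>R trace M" for s
  proof -
    have idP: "id \<in> ?P" by (simp add: permutes_id)
    have fin: "finite ?P" by (simp add: finite_permutations)
    define F where "F p = of_int (sign p) * (\<Sum>i\<in>UNIV. (s *\<^sub>R M $ i $ p i) * (\<Prod>j\<in>UNIV-{i}. (mat 1 + 0 *\<^sub>R M) $ j $ p j))" for p :: "'n \<Rightarrow> 'n"
    have "(\<Sum>p\<in>?P. F p) = F id + (\<Sum>p\<in>?P-{id}. F p)"
      by (rule sum.remove[OF fin idP])
    also have "(\<Sum>p\<in>?P-{id}. F p) = 0"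
      using z unfolding F_def by simp
    also have "F id = (\<Sum>i\<in>UNIV. s *\<^sub>R M $ i $ i)"
      unfolding F_def by (simp add: sign_id mat_def)
    also have "\<dots> = s *\<^sub>R trace M" by (simp add: trace_def scaleR_sum_right)
    finally show ?thesis unfolding F_def by simp
  qed
  with D show ?thesis by simp
qed

lemma det_deriv_line:
  fixes J K :: "complex^'n::finite^'n"
  assumes "det J \<noteq> 0"
  shows "((\<lambda>t::real. det (J + t *\<^sub>R K)) has_derivative (\<lambda>s. det J * (s *\<^sub>R trace (matrix_inv J ** K)))) (at 0)"
proof -
  have eq: "J + t *\<^sub>R K = J ** (mat 1 + t *\<^sub>R (matrix_inv J ** K))" for t
    by (simp add: matrix_add_ldistrib matrix_scalar_ac scalar_matrix_assoc[symmetric] matrix_mul_assoc inv_props[OF assms])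
  show ?thesis
    unfolding eq det_mul
    by (intro has_derivative_mult_right det_deriv_id)
qed

lemma transpose_add': "transpose (X + Y) = transpose X + transpose (Y::'a::comm_ring_1^'n^'m)"
  by (simp add: vec_eq_iff transpose_def)

lemma WJ_inv:
  fixes \<gamma> y :: "int^('g::finite+'g)^('g+'g)"
  assumes sp: "transpose \<gamma> ** Omega ** \<gamma> = Omega" "\<gamma> ** y = mat 1"
    and Zs: "Z \<in> sym_mats" and Ws: "sp_act \<gamma> Z \<in> sym_mats" and dJ: "det (Jfac \<gamma> Z) \<noteq> 0"
  shows "(blkA \<gamma> - sp_act \<gamma> Z ** blkC \<gamma>) ** transpose (Jfac \<gamma> Z) = mat 1"
proof -
  let ?A = "blkA \<gamma>" and ?B = "blkB \<gamma>" and ?C = "blkC \<gamma>" and ?D = "blkD \<gamma>"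
  let ?J = "Jfac \<gamma> Z" and ?W = "sp_act \<gamma> Z"
  note S = symp_blocks[OF sp]
  have WJ: "?W ** ?J = ?A ** Z + ?B"
    unfolding sp_act_def by (simp add: matrix_mul_assoc[symmetric] inv_props[OF dJ])
  have tW: "transpose ?W = ?W" "transpose Z = Z" using Zs Ws by (auto simp: sym_mats_def)
  have JtW: "transpose ?J ** ?W = Z ** transpose ?A + transpose ?B"
  proof -
    have "transpose ?J ** ?W = transpose (?W ** ?J)"
      by (simp add: matrix_transpose_mul tW)
    also have "\<dots> = Z ** transpose ?A + transpose ?B"
      unfolding WJ by (simp add: transpose_add' matrix_transpose_mul tW)
    finally show ?thesis .
  qed
  have tJ: "transpose ?J = Z ** transpose ?C + transpose ?D"
    unfolding Jfac_def by (simp add: transpose_add' matrix_transpose_mul tW)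
  have "transpose ?J ** (?A - ?W ** ?C) = transpose ?J ** ?A - (transpose ?J ** ?W) ** ?C"
    by (simp add: matrix_diff_ldistrib matrix_mul_assoc)
  also have "\<dots> = Z ** (transpose ?C ** ?A) + transpose ?D ** ?A - (Z ** (transpose ?A ** ?C) + transpose ?B ** ?C)"
    unfolding JtW unfolding tJ by (simp add: matrix_add_rdistrib matrix_mul_assoc)
  also have "\<dots> = transpose ?D ** ?A - transpose ?B ** ?C"
    using S(1) by simp
  also have "\<dots> = mat 1" by (rule S(2))
  finally have "transpose ?J ** (?A - ?W ** ?C) = mat 1" .
  thus ?thesis using matrix_left_right_inverse by blast
qed

lemma detnz_lemma:
  fixes \<iota> :: "complex \<Rightarrow> 'a::real_normed_algebra_1"
  assumes "complex_alg_struct \<iota>" "N \<noteq> 0" "alg_invertible (\<iota> (d powi N) * x)"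
  shows "d \<noteq> 0"
proof
  assume "d = 0"
  hence "\<iota> (d powi N) * x = 0" using assms(2) iota_props(4)[OF assms(1)] by simp
  with assms(3) obtain y where "y * 0 = (1::'a)" unfolding alg_invertible_def by auto
  thus False by simp
qed

lemma key:
  fixes \<gamma> y :: "int^('g::finite+'g)^('g+'g)"
    and \<iota> :: "complex \<Rightarrow> 'a::real_normed_algebra_1"
    and \<Phi> :: "complex^'g^'g \<Rightarrow> 'a"
  assumes \<iota>: "complex_alg_struct \<iota>" and N: "N \<noteq> 0"
    and Uo: "openin (top_of_set sym_mats) U"
    and Uinv: "\<forall>Y\<in>U. sp_act \<gamma> Y \<in> U"
    and inv: "\<forall>Y\<in>U. alg_invertible (\<Phi> Y)"
    and feq: "\<forall>Y\<in>U. \<Phi> (sp_act \<gamma> Y) = \<iota> (det (Jfac \<gamma> Y) powi N) * \<Phi> Y"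
    and sp: "transpose \<gamma> ** Omega ** \<gamma> = Omega" "\<gamma> ** y = mat 1"
    and Z: "Z \<in> U" and V: "V \<in> sym_mats"
    and dW: "(\<Phi> has_derivative DW) (at (sp_act \<gamma> Z) within sym_mats)"
    and dZ: "(\<Phi> has_derivative DZ) (at Z within sym_mats)"
  shows "DW V = \<iota> (det (Jfac \<gamma> Z) powi N) * DZ (transpose (Jfac \<gamma> Z) ** V ** Jfac \<gamma> Z)
     + \<iota> (of_int N * trace (blkC \<gamma> ** transpose (Jfac \<gamma> Z) ** V) * det (Jfac \<gamma> Z) powi N) * \<Phi> Z"
proof -
  let ?A = "blkA \<gamma>" and ?B = "blkB \<gamma>" and ?C = "blkC \<gamma>" and ?D = "blkD \<gamma>"
  define J where "J = Jfac \<gamma> Z"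
  define W where "W = sp_act \<gamma> Z"
  define H where "H = transpose J ** V ** J"
  define X where "X = ?A - W ** ?C"
  have Usym: "U \<subseteq> sym_mats" using openin_imp_subset[OF Uo] by simp
  obtain Op where O: "open Op" "U = sym_mats \<inter> Op" using Uo unfolding openin_open by blast
  have detnz: "det (Jfac \<gamma> Y) \<noteq> 0" if "Y \<in> U" for Y
  proof -
    have "alg_invertible (\<iota> (det (Jfac \<gamma> Y) powi N) * \<Phi> Y)"
      using inv Uinv feq that by metis
    thus ?thesis by (rule detnz_lemma[OF \<iota> N])
  qed
  have dJ: "det J \<noteq> 0" unfolding J_def using detnz Z by blast
  have Zs: "Z \<in> sym_mats" using Z Usym by blast
  have Ws: "W \<in> sym_mats" unfolding W_def using Z Uinv Usym by blast
  have Hs: "H \<in> sym_mats" using V unfolding H_def sym_mats_def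
    by (simp add: matrix_transpose_mul matrix_mul_assoc)
  define T where "T = {t::real. Z + t *\<^sub>R H \<in> Op}"
  have oT: "open T"
  proof -
    have "T = (\<lambda>t::real. Z + t *\<^sub>R H) -` Op" unfolding T_def by auto
    thus ?thesis using O(1) by (simp add: continuous_open_vimage continuous_intros)
  qed
  have T0: "0 \<in> T" unfolding T_def using Z O by auto
  have inU: "Z + t *\<^sub>R H \<in> U" if "t \<in> T" for t
    using that Zs Hs O unfolding T_def by (auto intro: sym_mats_add sym_mats_scaleR)
  have Jt: "Jfac \<gamma> (Z + t *\<^sub>R H) = J + t *\<^sub>R (?C ** H)" for t
    unfolding J_def Jfac_def by (simp add: matrix_add_ldistrib matrix_scalar_ac scalar_matrix_assoc algebra_simps)
  have dJt: "det (J + t *\<^sub>R (?C ** H)) \<noteq> 0" if "t \<in> T" for t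
    using detnz[OF inU[OF that]] Jt by simp
  have d1: "((\<lambda>t::real. det (J + t *\<^sub>R (?C ** H))) has_derivative (\<lambda>s. det J * (s *\<^sub>R trace (matrix_inv J ** (?C ** H))))) (at 0)"
    by (rule det_deriv_line[OF dJ])
  have d2: "((\<lambda>t::real. det (J + t *\<^sub>R (?C ** H)) powi N) has_derivative
     (\<lambda>s. det J * (s *\<^sub>R trace (matrix_inv J ** (?C ** H))) * (of_int N * det J powi (N - 1)))) (at 0)"
    using has_derivative_power_int[of "\<lambda>t::real. det (J + t *\<^sub>R (?C ** H))" 0, OF _ d1] dJ by simp
  have d3: "((\<lambda>t::real. \<iota> (det (J + t *\<^sub>R (?C ** H)) powi N)) has_derivative
     (\<lambda>s. \<iota> (det J * (s *\<^sub>R trace (matrix_inv J ** (?C ** H))) * (of_int N * det J powi (N - 1))))) (at 0)"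
    by (rule bounded_linear.has_derivative[OF iota_props(1)[OF \<iota>] d2])
  have d4: "((\<lambda>t::real. \<Phi> (Z + t *\<^sub>R H)) has_derivative (\<lambda>s. s *\<^sub>R DZ H)) (at 0)"
    by (rule line_deriv[OF dZ Zs Hs])
  have d5: "((\<lambda>t::real. \<iota> (det (J + t *\<^sub>R (?C ** H)) powi N) * \<Phi> (Z + t *\<^sub>R H)) has_derivative
     (\<lambda>s. \<iota> (det J powi N) * (s *\<^sub>R DZ H) +
          \<iota> (det J * (s *\<^sub>R trace (matrix_inv J ** (?C ** H))) * (of_int N * det J powi (N - 1))) * \<Phi> Z)) (at 0)"
    using has_derivative_mult[OF d3 d4] by simp
  define c where "c t = sp_act \<gamma> (Z + t *\<^sub>R H)" for t :: real
  have c0: "c 0 = W" unfolding c_def W_def by simp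
  have WJ: "W ** J = ?A ** Z + ?B"
    unfolding W_def J_def sp_act_def by (simp add: matrix_mul_assoc[symmetric] inv_props[OF dJ[unfolded J_def]])
  have cq: "(1/t) *\<^sub>R (c t - c 0) = X ** H ** matrix_inv (J + t *\<^sub>R (?C ** H))" if "t \<in> T" "t \<noteq> 0" for t
  proof -
    let ?Jt = "J + t *\<^sub>R (?C ** H)"
    have ct: "c t = (?A ** (Z + t *\<^sub>R H) + ?B) ** matrix_inv ?Jt"
      unfolding c_def sp_act_def Jt ..
    have ctJ: "c t ** ?Jt = ?A ** Z + ?B + t *\<^sub>R (?A ** H)"
    proof -
      have "c t ** ?Jt = (?A ** (Z + t *\<^sub>R H) + ?B) ** (matrix_inv ?Jt ** ?Jt)"
        unfolding ct by (simp only: matrix_mul_assoc)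
      also have "\<dots> = ?A ** (Z + t *\<^sub>R H) + ?B" using inv_props(2)[OF dJt[OF that(1)]] by simp
      also have "\<dots> = ?A ** Z + ?B + t *\<^sub>R (?A ** H)"
        by (simp add: matrix_add_ldistrib matrix_scalar_ac scalar_matrix_assoc algebra_simps)
      finally show ?thesis .
    qed
    have WJt: "W ** ?Jt = ?A ** Z + ?B + t *\<^sub>R (W ** ?C ** H)"
      by (simp add: matrix_add_ldistrib WJ matrix_scalar_ac scalar_matrix_assoc matrix_mul_assoc)
    have "(c t - W) ** ?Jt = t *\<^sub>R (X ** H)"
      unfolding matrix_diff_rdistrib ctJ WJt X_def
      by (simp add: matrix_diff_rdistrib scaleR_diff_right matrix_mul_assoc)
    hence "(c t - W) ** ?Jt ** matrix_inv ?Jt = t *\<^sub>R (X ** H) ** matrix_inv ?Jt" by simp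
    hence "c t - W = t *\<^sub>R (X ** H ** matrix_inv ?Jt)"
      using inv_props[OF dJt[OF that(1)]]
      by (simp add: matrix_mul_assoc[symmetric] scalar_matrix_assoc)
    thus ?thesis using that(2) c0 by simp
  qed
  have evT: "\<forall>\<^sub>F t in at (0::real). t \<in> T - {0}" by (rule eventually_at_in_open[OF oT T0])
  have lim: "((\<lambda>t. X ** H ** matrix_inv (J + t *\<^sub>R (?C ** H))) \<longlongrightarrow> X ** H ** matrix_inv J) (at (0::real))"
  proof (rule tendsto_matrix_mult_left, rule tendsto_matrix_inv)
    show "((\<lambda>t. J + t *\<^sub>R (?C ** H)) \<longlongrightarrow> J) (at (0::real))"
      by (auto intro!: tendsto_eq_intros)
    show "det J \<noteq> 0" by (rule dJ)
    show "\<forall>\<^sub>F t in at (0::real). det (J + t *\<^sub>R (?C ** H)) \<noteq> 0"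
      using evT by eventually_elim (use dJt in auto)
  qed
  have XHJ: "X ** H ** matrix_inv J = V"
  proof -
    have "X ** transpose J = mat 1"
      unfolding X_def W_def J_def
      using WJ_inv[OF sp Zs] Ws dJ unfolding W_def J_def by blast
    thus ?thesis unfolding H_def
      by (simp add: matrix_mul_assoc inv_props[OF dJ] flip: matrix_mul_assoc) (metis matrix_mul_assoc matrix_mul_lid matrix_mul_rid inv_props(1)[OF dJ])
  qed
  have dc: "(c has_derivative (\<lambda>s. s *\<^sub>R V)) (at 0)"
  proof -
    have "((\<lambda>t. (1/t) *\<^sub>R (c t - c 0)) \<longlongrightarrow> V) (at (0::real))"
    proof (rule Lim_transform_eventually[OF lim[unfolded XHJ]])
      show "\<forall>\<^sub>F t in at (0::real). X ** H ** matrix_inv (J + t *\<^sub>R (?C ** H)) = (1/t) *\<^sub>R (c t - c 0)"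
        using evT by eventually_elim (use cq in auto)
    qed
    thus ?thesis using dq_iff by blast
  qed
  have imgT: "c ` T \<subseteq> sym_mats" unfolding c_def using Uinv inU Usym by blast
  have dW': "(\<Phi> has_derivative DW) (at (c 0) within c ` T)"
    using has_derivative_subset[OF dW imgT] c0 W_def by simp
  have "((\<lambda>t. \<Phi> (c t)) has_derivative (\<lambda>s. DW (s *\<^sub>R V))) (at 0 within T)"
    by (rule has_derivative_in_compose[OF has_derivative_subset[OF dc subset_UNIV] dW'])
  hence dF: "((\<lambda>t. \<Phi> (c t)) has_derivative (\<lambda>s. DW (s *\<^sub>R V))) (at 0)"
    using at_within_open[OF T0 oT] by simp
  have FG: "\<Phi> (c t) = \<iota> (det (J + t *\<^sub>R (?C ** H)) powi N) * \<Phi> (Z + t *\<^sub>R H)" if "t \<in> T" for t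
    using feq inU[OF that] Jt unfolding c_def by metis
  have dG: "((\<lambda>t::real. \<iota> (det (J + t *\<^sub>R (?C ** H)) powi N) * \<Phi> (Z + t *\<^sub>R H)) has_derivative (\<lambda>s. DW (s *\<^sub>R V))) (at 0)"
    by (rule has_derivative_transform_within_open[OF dF oT T0]) (use FG in auto)
  have "(\<lambda>s. DW (s *\<^sub>R V)) = (\<lambda>s. \<iota> (det J powi N) * (s *\<^sub>R DZ H) +
          \<iota> (det J * (s *\<^sub>R trace (matrix_inv J ** (?C ** H))) * (of_int N * det J powi (N - 1))) * \<Phi> Z)"
    by (rule has_derivative_unique[OF dG d5])
  from fun_cong[OF this, of 1]
  have e1: "DW V = \<iota> (det J powi N) * DZ H + \<iota> (det J * trace (matrix_inv J ** (?C ** H)) * (of_int N * det J powi (N - 1))) * \<Phi> Z"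
    by simp
  have tr: "trace (matrix_inv J ** (?C ** H)) = trace (?C ** transpose J ** V)"
  proof -
    have "trace (matrix_inv J ** (?C ** H)) = trace ((matrix_inv J ** (?C ** transpose J ** V)) ** J)"
      unfolding H_def by (simp add: matrix_mul_assoc)
    also have "\<dots> = trace (J ** (matrix_inv J ** (?C ** transpose J ** V)))"
      by (rule trace_mul_sym)
    also have "\<dots> = trace (?C ** transpose J ** V)"
      by (simp add: matrix_mul_assoc inv_props[OF dJ])
    finally show ?thesis .
  qed
  have pw: "det J * det J powi (N - 1) = det J powi N"
    using power_int_add_1'[of "det J" "N - 1"] dJ by simp
  have "det J * trace (matrix_inv J ** (?C ** H)) * (of_int N * det J powi (N - 1)) =
      of_int N * trace (?C ** transpose J ** V) * det J powi N"
    unfolding tr by (simp only: pw[symmetric] mult_ac)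
  with e1 show ?thesis unfolding J_def H_def by simp
qed

definition isc :: "(complex \<Rightarrow> 'a::real_normed_algebra_1) \<Rightarrow> complex \<Rightarrow> 'a \<Rightarrow> 'a" where
  "isc \<iota> c x = \<iota> c * x"

lemma isc_rules:
  fixes \<iota> :: "complex \<Rightarrow> 'a::real_normed_algebra_1"
  assumes cs: "complex_alg_struct \<iota>"
  shows "\<iota> c = isc \<iota> c 1" "isc \<iota> a (isc \<iota> b x) = isc \<iota> (a * b) x"
    "x * isc \<iota> c y = isc \<iota> c (x * y)" "isc \<iota> c x * y = isc \<iota> c (x * y)"
    "isc \<iota> c (x + y) = isc \<iota> c x + isc \<iota> c y" "isc \<iota> c (sum f S) = (\<Sum>k\<in>S. isc \<iota> c (f k))"
    "isc \<iota> 1 x = x"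
proof -
  note P = iota_props[OF cs]
  show "\<iota> c = isc \<iota> c 1" by (simp add: isc_def)
  show "isc \<iota> a (isc \<iota> b x) = isc \<iota> (a * b) x" by (simp add: isc_def P(3) mult.assoc)
  show "x * isc \<iota> c y = isc \<iota> c (x * y)"
    unfolding isc_def by (metis P(6) mult.assoc)
  show "isc \<iota> c x * y = isc \<iota> c (x * y)" by (simp add: isc_def mult.assoc)
  show "isc \<iota> c (x + y) = isc \<iota> c x + isc \<iota> c y" by (simp add: isc_def distrib_left)
  show "isc \<iota> c (sum f S) = (\<Sum>k\<in>S. isc \<iota> c (f k))" by (simp add: isc_def sum_distrib_left)
  show "isc \<iota> 1 x = x" by (simp add: isc_def P(5))
qed

lemma final_alg:
  fixes \<iota> :: "complex \<Rightarrow> 'a::real_normed_algebra_1"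
  assumes cs: "complex_alg_struct \<iota>" and d: "d \<noteq> 0" and N: "N \<noteq> 0" and PP: "Pinv * P = 1"
  shows "\<iota> (2*e / of_int N) * ((\<iota> (inverse d) * Pinv) * (\<iota> c0 * (\<iota> d * (\<Sum>k\<in>UNIV. \<Sum>l\<in>UNIV. \<iota> (a k * b l) * G k l) + \<iota> (of_int N * T * d) * P)))
   = (\<Sum>k\<in>(UNIV::'g::finite set). \<Sum>l\<in>(UNIV::'g set). \<iota> (a k) * (\<iota> (2*e / of_int N) * (Pinv * (\<iota> c0 * G k l))) * \<iota> (b l)) + \<iota> (2*e*c0*T)"
proof -
  note R = isc_rules[OF cs]
  have c1: "2*e / of_int N * (inverse d * (c0 * (d * (a k * b l)))) = a k * (2*e / of_int N * (c0 * b l))" for k l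
    using d by (simp add: field_simps)
  have c2: "2*e / of_int N * (inverse d * (c0 * (of_int N * T * d))) = 2*e*c0*T"
    using d N by (simp add: field_simps)
  show ?thesis
    apply (simp only: R(1) R(2) R(3) R(4) R(5) R(6) sum_distrib_left sum_distrib_right distrib_left distrib_right mult_1_left mult_1_right PP mult.assoc)
    apply (intro arg_cong2[where f="(+)"] sum.cong refl arg_cong2[where f="isc \<iota>"])
    using d N by (simp_all add: field_simps)
qed

lemma alg_inv_unique:
  fixes x :: "'a::ring_1"
  assumes "y * x = 1" "x * y = 1"
  shows "alg_inv x = y"
  unfolding alg_inv_def
proof (rule the_equality)
  show "y * x = 1 \<and> x * y = 1" using assms by simp
  fix z assume "z * x = 1 \<and> x * z = 1"
  hence "z = z * (x * y)" using assms by simp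
  also have "\<dots> = (z * x) * y" by (simp add: mult.assoc)
  also have "\<dots> = y" using \<open>z * x = 1 \<and> x * z = 1\<close> by simp
  finally show "z = y" .
qed

lemma alg_inv_props:
  fixes x :: "'a::ring_1"
  assumes "alg_invertible x"
  shows "alg_inv x * x = 1" "x * alg_inv x = 1"
proof -
  obtain y where "y * x = 1" "x * y = 1" using assms unfolding alg_invertible_def by blast
  thus "alg_inv x * x = 1" "x * alg_inv x = 1" using alg_inv_unique by auto
qed

lemma alg_inv_scale:
  fixes \<iota> :: "complex \<Rightarrow> 'a::real_normed_algebra_1"
  assumes cs: "complex_alg_struct \<iota>" and d: "d \<noteq> 0" and x: "alg_invertible x"
  shows "alg_inv (\<iota> d * x) = \<iota> (inverse d) * alg_inv x"
proof (rule alg_inv_unique)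
  note P = iota_props[OF cs]
  note X = alg_inv_props[OF x]
  have id: "\<iota> (inverse d) * \<iota> d = 1" "\<iota> d * \<iota> (inverse d) = 1"
    using P(7)[OF d] P(6)[of "inverse d" "\<iota> d"] by auto
  have "\<iota> (inverse d) * alg_inv x * (\<iota> d * x) = \<iota> (inverse d) * (alg_inv x * \<iota> d) * x"
    by (simp add: mult.assoc)
  also have "\<dots> = \<iota> (inverse d) * (\<iota> d * alg_inv x) * x" by (simp add: P(6))
  also have "\<dots> = (\<iota> (inverse d) * \<iota> d) * (alg_inv x * x)" by (simp add: mult.assoc)
  also have "\<dots> = 1" using id X by simp
  finally show "\<iota> (inverse d) * alg_inv x * (\<iota> d * x) = 1" .
  have "\<iota> d * x * (\<iota> (inverse d) * alg_inv x) = \<iota> d * (x * \<iota> (inverse d)) * alg_inv x"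
    by (simp add: mult.assoc)
  also have "\<dots> = \<iota> d * (\<iota> (inverse d) * x) * alg_inv x" by (simp add: P(6))
  also have "\<dots> = (\<iota> d * \<iota> (inverse d)) * (x * alg_inv x)" by (simp add: mult.assoc)
  also have "\<dots> = 1" using id X by simp
  finally show "\<iota> d * x * (\<iota> (inverse d) * alg_inv x) = 1" .
qed

lemma trace_Ep_row: "(\<Sum>l\<in>UNIV. M $ k $ l * Ep i j $ l $ k) = (if k = j then M $ k $ i else 0) / 2 + (if k = i then M $ k $ j else 0) / 2"
proof -
  have "(\<Sum>l\<in>UNIV. M $ k $ l * Ep i j $ l $ k) = (\<Sum>l\<in>UNIV. (if l = i then (if k = j then M $ k $ l else 0) else 0) / 2 + (if l = j then (if k = i then M $ k $ l else 0) else 0) / 2)"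
    by (intro sum.cong refl) (cases "l = i"; cases "l = j"; cases "k = i"; cases "k = j"; simp add: Ep_entry)
  also have "\<dots> = (if k = j then M $ k $ i else 0) / 2 + (if k = i then M $ k $ j else 0) / 2"
    by (simp only: sum.distrib sum_divide_distrib[symmetric] sum.delta finite UNIV_I if_True)
  finally show ?thesis .
qed

lemma trace_Ep: "trace (M ** Ep i j) = (M $ j $ i + M $ i $ j) / 2"
proof -
  have "trace (M ** Ep i j) = (\<Sum>k\<in>UNIV. (if k = j then M $ k $ i else 0) / 2 + (if k = i then M $ k $ j else 0) / 2)"
    unfolding trace_def matrix_matrix_mult_def by (simp only: vec_lambda_beta trace_Ep_row)
  also have "\<dots> = (M $ j $ i + M $ i $ j) / 2"
    by (simp only: sum.distrib sum_divide_distrib[symmetric] sum.delta sum.delta' finite UNIV_I if_True add_divide_distrib)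
  finally show ?thesis .
qed

lemma H_col: "(\<Sum>p\<in>UNIV. J $ p $ a * Ep i j $ p $ q) = (if q = j then J $ i $ a else 0) / 2 + (if q = i then J $ j $ a else 0) / 2"
proof -
  have "(\<Sum>p\<in>UNIV. J $ p $ a * Ep i j $ p $ q) = (\<Sum>p\<in>UNIV. (if p = i then (if q = j then J $ p $ a else 0) else 0) / 2 + (if p = j then (if q = i then J $ p $ a else 0) else 0) / 2)"
    by (intro sum.cong refl) (cases "p = i"; cases "p = j"; cases "q = i"; cases "q = j"; simp add: Ep_entry)
  also have "\<dots> = (if q = j then J $ i $ a else 0) / 2 + (if q = i then J $ j $ a else 0) / 2"
    by (simp only: sum.distrib sum_divide_distrib[symmetric] sum.delta finite UNIV_I if_True)
  finally show ?thesis .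
qed

lemma H_rhs_row: "(\<Sum>l\<in>UNIV. J$i$k * J$j$l * Ep k l $ a $ b) = (if a = k then J$i$k * J$j$b else 0) / 2 + (if b = k then J$i$k * J$j$a else 0) / 2"
proof -
  have "(\<Sum>l\<in>UNIV. J$i$k * J$j$l * Ep k l $ a $ b) = (\<Sum>l\<in>UNIV. (if l = b then (if a = k then J$i$k * J$j$l else 0) else 0) / 2 + (if l = a then (if b = k then J$i$k * J$j$l else 0) else 0) / 2)"
    by (intro sum.cong refl) (cases "l = a"; cases "l = b"; cases "a = k"; cases "b = k"; simp add: Ep_entry)
  also have "\<dots> = (if a = k then J$i$k * J$j$b else 0) / 2 + (if b = k then J$i$k * J$j$a else 0) / 2"
    by (simp only: sum.distrib sum_divide_distrib[symmetric] sum.delta finite UNIV_I if_True)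
  finally show ?thesis .
qed

lemma H_expand:
  fixes J :: "complex^'g::finite^'g"
  shows "transpose J ** Ep i j ** J = (\<Sum>k\<in>UNIV. \<Sum>l\<in>UNIV. cscale (J$i$k * J$j$l) (Ep k l))"
proof (rule iffD2[OF vec_eq_iff], rule allI, rule iffD2[OF vec_eq_iff], rule allI)
  fix a b
  have "(transpose J ** Ep i j ** J) $ a $ b = (\<Sum>q\<in>UNIV. ((if q = j then J $ i $ a else 0) / 2 + (if q = i then J $ j $ a else 0) / 2) * J $ q $ b)"
    unfolding matrix_matrix_mult_def transpose_def by (simp only: vec_lambda_beta H_col)
  also have "\<dots> = (\<Sum>q\<in>UNIV. (if q = j then J $ i $ a * J $ q $ b else 0) / 2 + (if q = i then J $ j $ a * J $ q $ b else 0) / 2)"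
    by (intro sum.cong refl) (simp add: distrib_right)
  also have "\<dots> = J $ i $ a * J $ j $ b / 2 + J $ j $ a * J $ i $ b / 2"
    by (simp only: sum.distrib sum_divide_distrib[symmetric] sum.delta finite UNIV_I if_True)
  also have "\<dots> = (\<Sum>k\<in>UNIV. (if a = k then J$i$k * J$j$b else 0) / 2 + (if b = k then J$i$k * J$j$a else 0) / 2)"
    by (simp only: sum.distrib sum_divide_distrib[symmetric] sum.delta' finite UNIV_I if_True) (simp add: mult.commute)
  also have "\<dots> = (\<Sum>k\<in>UNIV. \<Sum>l\<in>UNIV. J$i$k * J$j$l * Ep k l $ a $ b)"
    by (simp only: H_rhs_row)
  also have "\<dots> = (\<Sum>k\<in>UNIV. \<Sum>l\<in>UNIV. cscale (J$i$k * J$j$l) (Ep k l)) $ a $ b"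
    by (simp add: cscale_def)
  finally show "(transpose J ** Ep i j ** J) $ a $ b = (\<Sum>k\<in>UNIV. \<Sum>l\<in>UNIV. cscale (J$i$k * J$j$l) (Ep k l)) $ a $ b" .
qed

lemma D_expand:
  fixes D' :: "complex^'g::finite^'g \<Rightarrow> 'a::real_normed_algebra_1"
  assumes "bounded_linear D'" "\<forall>c H. H \<in> sym_mats \<longrightarrow> D' (cscale c H) = \<iota> c * D' H"
  shows "D' (\<Sum>k\<in>UNIV. \<Sum>l\<in>UNIV. cscale (f k l) (Ep k l)) = (\<Sum>k\<in>UNIV. \<Sum>l\<in>UNIV. \<iota> (f k l) * D' (Ep k l))"
proof -
  have lin: "linear D'" using assms(1) bounded_linear.linear by blast
  have cs: "\<And>c k l. D' (cscale c (Ep k l)) = \<iota> c * D' (Ep k l)" using assms(2) Ep_sym by blast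
  show ?thesis by (simp add: linear_sum[OF lin] cs)
qed

theorem mainTheorem19:
  fixes \<Gamma> :: "(int^('g::finite+'g)^('g+'g)) set"
    and \<iota> :: "complex \<Rightarrow> 'a::real_normed_algebra_1"
    and e :: complex and N :: int
    and \<Phi> :: "complex^'g^'g \<Rightarrow> 'a"
    and U :: "(complex^'g^'g) set"
  assumes "congruence_subgroup \<Gamma>"
    and "complex_alg_struct \<iota>"
    and "e \<noteq> 0" and "N \<noteq> 0"
    and "U \<subseteq> siegel_H" and "openin (top_of_set sym_mats) U"
    and "\<forall>\<gamma>\<in>\<Gamma>. \<forall>Z\<in>U. sp_act \<gamma> Z \<in> U"
    and "\<forall>Z\<in>U. holo_at \<iota> \<Phi> Z"
    and "\<forall>Z\<in>U. alg_invertible (\<Phi> Z)"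
    and "\<forall>\<gamma>\<in>\<Gamma>. \<forall>Z\<in>U. \<Phi> (sp_act \<gamma> Z) = \<iota> (det (Jfac \<gamma> Z) powi N) * \<Phi> Z"
  shows "\<forall>\<gamma>\<in>\<Gamma>. \<forall>Z\<in>U. \<forall>i j.
           A_Phi \<iota> e N \<Phi> (sp_act \<gamma> Z) $ i $ j =
             (\<Sum>k\<in>UNIV. \<Sum>l\<in>UNIV. \<iota> (Jfac \<gamma> Z $ i $ k) * A_Phi \<iota> e N \<Phi> Z $ k $ l * \<iota> (Jfac \<gamma> Z $ j $ l))
             + \<iota> (2 * e / (2 * pi * \<i>) * (Jfac \<gamma> Z ** transpose (blkC \<gamma>)) $ i $ j)"
proof (intro ballI allI)
  fix \<gamma> Z i j assume g: "\<gamma> \<in> \<Gamma>" and Z: "Z \<in> U"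
  have cs: "complex_alg_struct \<iota>" and N: "N \<noteq> 0" by (rule assms(2), rule assms(4))
  have sub: "is_subgroup_Sp \<Gamma>" using assms(1) unfolding congruence_subgroup_def by blast
  have sp: "transpose \<gamma> ** Omega ** \<gamma> = Omega" using sub g unfolding is_subgroup_Sp_def Sp_Z_def by blast
  obtain y where y: "\<gamma> ** y = mat 1" using sub g unfolding is_subgroup_Sp_def by blast
  have Usym: "U \<subseteq> sym_mats" using openin_imp_subset[OF assms(6)] by simp
  define W where "W = sp_act \<gamma> Z"
  define J where "J = Jfac \<gamma> Z"
  define C where "C = blkC \<gamma>"
  define d where "d = det J powi N"
  have WU: "W \<in> U" unfolding W_def using assms(7) g Z by blast
  obtain DW where dW: "(\<Phi> has_derivative DW) (at W within sym_mats)"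
    and hW: "\<forall>c H. H \<in> sym_mats \<longrightarrow> DW (cscale c H) = \<iota> c * DW H"
    using assms(8) WU unfolding holo_at_def by blast
  obtain DZ where dZ: "(\<Phi> has_derivative DZ) (at Z within sym_mats)"
    and hZ: "\<forall>c H. H \<in> sym_mats \<longrightarrow> DZ (cscale c H) = \<iota> c * DZ H"
    using assms(8) Z unfolding holo_at_def by blast
  have fW: "\<Phi> W = \<iota> d * \<Phi> Z" unfolding W_def d_def J_def using assms(10) g Z by blast
  have invZ: "alg_invertible (\<Phi> Z)" using assms(9) Z by blast
  have "alg_invertible (\<iota> d * \<Phi> Z)" using assms(9) WU fW by metis
  hence dJ: "det J \<noteq> 0" unfolding d_def by (rule detnz_lemma[OF cs N])
  have d0: "d \<noteq> 0" unfolding d_def using dJ by simp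
  have key1: "DW (Ep i j) = \<iota> d * DZ (transpose J ** Ep i j ** J)
     + \<iota> (of_int N * trace (C ** transpose J ** Ep i j) * d) * \<Phi> Z"
    unfolding d_def J_def C_def
    by (rule key[OF cs N assms(6) _ _ _ sp y Z Ep_sym dW[unfolded W_def] dZ])
       (use assms(7,9,10) g in auto)
  have Jsym: "transpose (J ** transpose C) = J ** transpose C"
  proof -
    have S3: "C ** transpose (blkD \<gamma>) = blkD \<gamma> ** transpose C"
      unfolding C_def using symp_blocks(3)[OF sp y] .
    have tZ: "transpose Z = Z" using Z Usym by (auto simp: sym_mats_def)
    have "J ** transpose C = C ** Z ** transpose C + blkD \<gamma> ** transpose C"
      unfolding J_def Jfac_def C_def by (simp add: matrix_add_rdistrib)
    thus ?thesis using S3 tZ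
      by (simp add: transpose_add' matrix_transpose_mul matrix_mul_assoc)
  qed
  have T: "trace (C ** transpose J ** Ep i j) = (J ** transpose C) $ i $ j"
  proof -
    have "C ** transpose J = transpose (J ** transpose C)" by (simp add: matrix_transpose_mul)
    hence "C ** transpose J = J ** transpose C" using Jsym by simp
    hence "trace (C ** transpose J ** Ep i j) = ((J ** transpose C) $ j $ i + (J ** transpose C) $ i $ j) / 2"
      by (simp add: trace_Ep)
    also have "(J ** transpose C) $ j $ i = (J ** transpose C) $ i $ j"
      using Jsym by (metis transpose_def vec_lambda_beta)
    finally show ?thesis by simp
  qed
  have DZH: "DZ (transpose J ** Ep i j ** J) = (\<Sum>k\<in>UNIV. \<Sum>l\<in>UNIV. \<iota> (J$i$k * J$j$l) * DZ (Ep k l))"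
    unfolding H_expand by (rule D_expand[OF has_derivative_bounded_linear[OF dZ] hZ])
  have Ws: "W \<in> sym_mats" and Zs: "Z \<in> sym_mats" using WU Z Usym by auto
  have DopW: "Dop \<iota> \<Phi> W $ i $ j = \<iota> (1 / (2 * pi * \<i>)) * DW (Ep i j)"
    by (rule Dop_eq[OF cs dW Ws hW])
  have DopZ: "Dop \<iota> \<Phi> Z $ k $ l = \<iota> (1 / (2 * pi * \<i>)) * DZ (Ep k l)" for k l
    by (rule Dop_eq[OF cs dZ Zs hZ])
  have ainv: "alg_inv (\<Phi> W) = \<iota> (inverse d) * alg_inv (\<Phi> Z)"
    unfolding fW by (rule alg_inv_scale[OF cs d0 invZ])
  have PP: "alg_inv (\<Phi> Z) * \<Phi> Z = 1" using alg_inv_props[OF invZ] by simp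
  have "A_Phi \<iota> e N \<Phi> W $ i $ j = \<iota> (2 * e / of_int N) * ((\<iota> (inverse d) * alg_inv (\<Phi> Z)) *
       (\<iota> (1 / (2 * pi * \<i>)) * (\<iota> d * (\<Sum>k\<in>UNIV. \<Sum>l\<in>UNIV. \<iota> (J$i$k * J$j$l) * DZ (Ep k l))
        + \<iota> (of_int N * ((J ** transpose C) $ i $ j) * d) * \<Phi> Z)))"
    unfolding A_Phi_def vec_lambda_beta ainv DopW key1 DZH T ..
  also have "\<dots> = (\<Sum>k\<in>UNIV. \<Sum>l\<in>UNIV. \<iota> (J$i$k) * (\<iota> (2 * e / of_int N) * (alg_inv (\<Phi> Z) * (\<iota> (1 / (2 * pi * \<i>)) * DZ (Ep k l)))) * \<iota> (J$j$l))
      + \<iota> (2 * e * (1 / (2 * pi * \<i>)) * (J ** transpose C) $ i $ j)"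
    by (rule final_alg[OF cs d0 N PP])
  also have "\<dots> = (\<Sum>k\<in>UNIV. \<Sum>l\<in>UNIV. \<iota> (J $ i $ k) * A_Phi \<iota> e N \<Phi> Z $ k $ l * \<iota> (J $ j $ l))
      + \<iota> (2 * e / (2 * pi * \<i>) * (J ** transpose C) $ i $ j)"
    unfolding A_Phi_def vec_lambda_beta DopZ by simp
  finally show "A_Phi \<iota> e N \<Phi> (sp_act \<gamma> Z) $ i $ j =
             (\<Sum>k\<in>UNIV. \<Sum>l\<in>UNIV. \<iota> (Jfac \<gamma> Z $ i $ k) * A_Phi \<iota> e N \<Phi> Z $ k $ l * \<iota> (Jfac \<gamma> Z $ j $ l))
             + \<iota> (2 * e / (2 * pi * \<i>) * (Jfac \<gamma> Z ** transpose (blkC \<gamma>)) $ i $ j)"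
    unfolding W_def J_def C_def .
qed

end
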